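(* For all $(n,k),(p,q)\in\mathcal{I}$, $\Delta_{p,q}(\psi_{n,k})=\delta^{n,k}_{p,q}\,I_d$, where $\delta^{n,k}_{p,q}$ equals $1$ if $(n,k)=(p,q)$ and $0$ otherwise. That is, the generalized functions $\delta_{p,q}$ form a dual family to the functions $\psi_{n,k}$.
   Context: Let $d,m\geq 1$. Let $\alpha:[0,1]\to\mathbb{R}^{d\times d}$, $\sqrt{\Gamma}:[0,1]\to\mathbb{R}^{d\times m}$ be continuous, $\Gamma=\sqrt{\Gamma}\sqrt{\Gamma}^{T}$. Let $F(s,t)$ be the flow ($\partial_tF(s,t)=\alpha(t)F(s,t)$, $F(s,s)=I_d$), $h_u(s,t)=\int_s^t F(w,u)\Gamma(w)F(w,u)^Tdw$, $h=h_0$, $g(t)=F(0,t)$. Non-degeneracy: $F(u,v)h_u(u,v)F(u,v)^T$ is positive definite for all $0\le u<v\le1$. $\mathcal{I}=\{(0,0)\}\cup\{(n,k):n\ge1,\ 0\le k<2^{n-1}\}$. Partition: fix $\rho\in(0,1)$ and reals $l_{n,k}<m_{n,k}<r_{n,k}$ ($n\ge1$) with $l_{1,0}=0$, $r_{1,0}=1$, $l_{n+1,2k}=l_{n,k}$, $r_{n+1,2k}=l_{n+1,2k+1}=m_{n,k}$, $r_{n+1,2k+1}=r_{n,k}$, $\max(r_{n,k}-m_{n,k},m_{n,k}-l_{n,k})<\rho(r_{n,k}-l_{n,k})$. For $n\ge1$ (writing $l,m,r$ for $l_{n,k},m_{n,k},r_{n,k}$): $\Sigma_{n,k}=h_m(l,m)h_m(l,r)^{-1}h_m(m,r)$,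 $\sigma_{n,k}$ its lower-triangular Cholesky factor with positive diagonal, $L_{n,k}=h(l,m)^{-1}g(m)^{-1}\sigma_{n,k}$, $R_{n,k}=h(m,r)^{-1}g(m)^{-1}\sigma_{n,k}$, $M_{n,k}=g(m)^T(\sigma_{n,k}^{-1})^T$, and $\psi_{n,k}(t)=g(t)h(l,t)L_{n,k}$ on $[l,m]$, $g(t)h(t,r)R_{n,k}$ on $[m,r]$, $0$ elsewhere. Also $\sigma_{0,0}$ is the lower-triangular Cholesky factor of $g(1)h(0,1)g(1)^T$, $L_{0,0}=h(0,1)^{-1}g(1)^{-1}\sigma_{0,0}$, $\psi_{0,0}(t)=g(t)h(0,t)L_{0,0}$. Dual family: $\delta_{n,k}$ is the $\mathbb{R}^{d\times d}$-valued combination of Dirac masses $\delta_{n,k}(t)=(g(t)^{-1})^T\big(M_{n,k}\delta(t-m)-L_{n,k}\delta(t-l)-R_{n,k}\delta(t-r)\big)$ for $n\ge1$, and $\delta_{0,0}(t)=(g(t)^{-1})^TL_{0,0}\delta(t-1)$. Its pairing with a continuous matrix-valued function $x$ on $[0,1]$ is $\Delta_{n,k}(x)=\int\delta_{n,k}(t)^Tx(t)\,dt$, i.e. $\Delta_{n,k}(x)=M_{n,k}^Tg(m)^{-1}x(m)-L_{n,k}^Tg(l)^{-1}x(l)-R_{n,k}^Tg(r)^{-1}x(r)$ for $n\ge1$ and $\Delta_{0,0}(x)=L_{0,0}^Tg(1)^{-1}x(1)$. *)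

theory Defs
  imports "HOL-Analysis.Analysis"
begin


definition Gam :: "(real \<Rightarrow> real^'m^'d::{finite,linorder}) \<Rightarrow> real \<Rightarrow> real^'d::{finite,linorder}^'d::{finite,linorder}" where
  "Gam sG w = sG w ** transpose (sG w)"

definition hu :: "(real \<Rightarrow> real \<Rightarrow> real^'d::{finite,linorder}^'d::{finite,linorder}) \<Rightarrow> (real \<Rightarrow> real^'m^'d::{finite,linorder})
    \<Rightarrow> real \<Rightarrow> real \<Rightarrow> real \<Rightarrow> real^'d::{finite,linorder}^'d::{finite,linorder}" where
  "hu F sG u s t = integral {s..t} (\<lambda>w. F w u ** Gam sG w ** transpose (F w u))"

definition hh :: "(real \<Rightarrow> real \<Rightarrow> real^'d::{finite,linorder}^'d::{finite,linorder}) \<Rightarrow> (real \<Rightarrow> real^'m^'d::{finite,linorder})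
    \<Rightarrow> real \<Rightarrow> real \<Rightarrow> real^'d::{finite,linorder}^'d::{finite,linorder}" where
  "hh F sG s t = hu F sG 0 s t"

definition gg :: "(real \<Rightarrow> real \<Rightarrow> real^'d::{finite,linorder}^'d::{finite,linorder}) \<Rightarrow> real \<Rightarrow> real^'d::{finite,linorder}^'d::{finite,linorder}" where
  "gg F t = F 0 t"

definition pos_def_mat :: "real^'d::{finite,linorder}^'d::{finite,linorder} \<Rightarrow> bool" where
  "pos_def_mat A \<longleftrightarrow> (\<forall>x. x \<noteq> 0 \<longrightarrow> x \<bullet> (A *v x) > 0)"

definition lower_triangular :: "real^'d::{finite,linorder}^'d::{finite,linorder} \<Rightarrow> bool" where
  "lower_triangular L \<longleftrightarrow> (\<forall>i j. i < j \<longrightarrow> L $ i $ j = 0)"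

definition cholesky :: "real^'d::{finite,linorder}^'d::{finite,linorder} \<Rightarrow> real^'d::{finite,linorder}^'d::{finite,linorder}" where
  "cholesky A = (THE L. lower_triangular L \<and> (\<forall>i. L $ i $ i > 0) \<and> L ** transpose L = A)"

definition idx :: "(nat \<times> nat) set" where
  "idx = {(0,0)} \<union> {(n,k). n \<ge> 1 \<and> k < 2^(n-1)}"

text \<open>sigma_{n,k}; lp mp rp are the partition points l_{n,k}, m_{n,k}, r_{n,k}\<close>
definition sig :: "(real \<Rightarrow> real \<Rightarrow> real^'d::{finite,linorder}^'d::{finite,linorder}) \<Rightarrow> (real \<Rightarrow> real^'m^'d::{finite,linorder})
    \<Rightarrow> (nat \<Rightarrow> nat \<Rightarrow> real) \<Rightarrow> (nat \<Rightarrow> nat \<Rightarrow> real) \<Rightarrow> (nat \<Rightarrow> nat \<Rightarrow> real)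
    \<Rightarrow> nat \<Rightarrow> nat \<Rightarrow> real^'d::{finite,linorder}^'d::{finite,linorder}" where
  "sig F sG lp mp rp n k =
    (if n = 0 then cholesky (gg F 1 ** hh F sG 0 1 ** transpose (gg F 1))
     else (let l = lp n k; m = mp n k; r = rp n k in
       cholesky (hu F sG m l m ** matrix_inv (hu F sG m l r) ** hu F sG m m r)))"

definition Lm :: "(real \<Rightarrow> real \<Rightarrow> real^'d::{finite,linorder}^'d::{finite,linorder}) \<Rightarrow> (real \<Rightarrow> real^'m^'d::{finite,linorder})
    \<Rightarrow> (nat \<Rightarrow> nat \<Rightarrow> real) \<Rightarrow> (nat \<Rightarrow> nat \<Rightarrow> real) \<Rightarrow> (nat \<Rightarrow> nat \<Rightarrow> real)
    \<Rightarrow> nat \<Rightarrow> nat \<Rightarrow> real^'d::{finite,linorder}^'d::{finite,linorder}" where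
  "Lm F sG lp mp rp n k =
    (if n = 0 then matrix_inv (hh F sG 0 1) ** matrix_inv (gg F 1) ** sig F sG lp mp rp 0 0
     else matrix_inv (hh F sG (lp n k) (mp n k)) ** matrix_inv (gg F (mp n k))
            ** sig F sG lp mp rp n k)"

definition Rm :: "(real \<Rightarrow> real \<Rightarrow> real^'d::{finite,linorder}^'d::{finite,linorder}) \<Rightarrow> (real \<Rightarrow> real^'m^'d::{finite,linorder})
    \<Rightarrow> (nat \<Rightarrow> nat \<Rightarrow> real) \<Rightarrow> (nat \<Rightarrow> nat \<Rightarrow> real) \<Rightarrow> (nat \<Rightarrow> nat \<Rightarrow> real)
    \<Rightarrow> nat \<Rightarrow> nat \<Rightarrow> real^'d::{finite,linorder}^'d::{finite,linorder}" where
  "Rm F sG lp mp rp n k =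
     matrix_inv (hh F sG (mp n k) (rp n k)) ** matrix_inv (gg F (mp n k)) ** sig F sG lp mp rp n k"

definition Mm :: "(real \<Rightarrow> real \<Rightarrow> real^'d::{finite,linorder}^'d::{finite,linorder}) \<Rightarrow> (real \<Rightarrow> real^'m^'d::{finite,linorder})
    \<Rightarrow> (nat \<Rightarrow> nat \<Rightarrow> real) \<Rightarrow> (nat \<Rightarrow> nat \<Rightarrow> real) \<Rightarrow> (nat \<Rightarrow> nat \<Rightarrow> real)
    \<Rightarrow> nat \<Rightarrow> nat \<Rightarrow> real^'d::{finite,linorder}^'d::{finite,linorder}" where
  "Mm F sG lp mp rp n k =
     transpose (gg F (mp n k)) ** transpose (matrix_inv (sig F sG lp mp rp n k))"

definition psi :: "(real \<Rightarrow> real \<Rightarrow> real^'d::{finite,linorder}^'d::{finite,linorder}) \<Rightarrow> (real \<Rightarrow> real^'m^'d::{finite,linorder})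
    \<Rightarrow> (nat \<Rightarrow> nat \<Rightarrow> real) \<Rightarrow> (nat \<Rightarrow> nat \<Rightarrow> real) \<Rightarrow> (nat \<Rightarrow> nat \<Rightarrow> real)
    \<Rightarrow> nat \<Rightarrow> nat \<Rightarrow> real \<Rightarrow> real^'d::{finite,linorder}^'d::{finite,linorder}" where
  "psi F sG lp mp rp n k t =
    (if n = 0 then gg F t ** hh F sG 0 t ** Lm F sG lp mp rp 0 0
     else if lp n k \<le> t \<and> t \<le> mp n k then
       gg F t ** hh F sG (lp n k) t ** Lm F sG lp mp rp n k
     else if mp n k \<le> t \<and> t \<le> rp n k then
       gg F t ** hh F sG t (rp n k) ** Rm F sG lp mp rp n k
     else 0)"

definition Delta :: "(real \<Rightarrow> real \<Rightarrow> real^'d::{finite,linorder}^'d::{finite,linorder}) \<Rightarrow> (real \<Rightarrow> real^'m^'d::{finite,linorder})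
    \<Rightarrow> (nat \<Rightarrow> nat \<Rightarrow> real) \<Rightarrow> (nat \<Rightarrow> nat \<Rightarrow> real) \<Rightarrow> (nat \<Rightarrow> nat \<Rightarrow> real)
    \<Rightarrow> nat \<Rightarrow> nat \<Rightarrow> (real \<Rightarrow> real^'d::{finite,linorder}^'d::{finite,linorder}) \<Rightarrow> real^'d::{finite,linorder}^'d::{finite,linorder}" where
  "Delta F sG lp mp rp p q x =
    (if p = 0 then transpose (Lm F sG lp mp rp 0 0) ** matrix_inv (gg F 1) ** x 1
     else (let l = lp p q; m = mp p q; r = rp p q in
       transpose (Mm F sG lp mp rp p q) ** matrix_inv (gg F m) ** x m
       - transpose (Lm F sG lp mp rp p q) ** matrix_inv (gg F l) ** x l
       - transpose (Rm F sG lp mp rp p q) ** matrix_inv (gg F r) ** x r))"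

end

theory Submission
  imports Defs
begin


lemma mm_add_rdistrib: "((A::'a::semiring_1^'n::finite^'m) + B) ** C = A ** C + B ** C"
  by (vector matrix_matrix_mult_def sum.distrib[symmetric] field_simps)
lemma mm_diff_rdistrib: "((A::'a::ring_1^'n::finite^'m) - B) ** C = A ** C - B ** C"
  by (vector matrix_matrix_mult_def sum_subtractf[symmetric] field_simps)
lemma mm_diff_ldistrib: "(A::'a::ring_1^'n::finite^'m) ** (B - C) = A ** B - A ** C"
  by (vector matrix_matrix_mult_def sum_subtractf[symmetric] field_simps)
lemma mm_neg_left: "(- (A::'a::ring_1^'n::finite^'m)) ** B = - (A ** B)"
  by (vector matrix_matrix_mult_def sum_negf[symmetric])
lemma mm_neg_right: "(A::'a::ring_1^'n::finite^'m) ** (- B) = - (A ** B)"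
  by (vector matrix_matrix_mult_def sum_negf[symmetric])
lemma mm_scaleR_left: "(c *\<^sub>R (A::real^'n::finite^'m)) ** B = c *\<^sub>R (A ** B)"
  by (vector matrix_matrix_mult_def sum_distrib_left mult.assoc)
lemma mm_scaleR_right: "(A::real^'n::finite^'m) ** (c *\<^sub>R B) = c *\<^sub>R (A ** B)"
  by (vector matrix_matrix_mult_def sum_distrib_left mult.assoc mult.left_commute)

lemma bilinear_matmul: "bilinear (\<lambda>(A::real^'n::finite^'n) (B::real^'n^'n). A ** B)"
  unfolding bilinear_def
  by (auto intro!: linearI simp: matrix_add_ldistrib mm_add_rdistrib mm_scaleR_left mm_scaleR_right)

lemma bb_matmul: "bounded_bilinear (\<lambda>(A::real^'n::finite^'n) (B::real^'n^'n). A ** B)"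
  using bilinear_matmul bilinear_conv_bounded_bilinear by blast

lemma bl_rmul: "bounded_linear (\<lambda>(A::real^'n::finite^'n). A ** (C::real^'n^'n))"
  by (rule bounded_bilinear.bounded_linear_left[OF bb_matmul])

lemma bl_lmul: "bounded_linear (\<lambda>(A::real^'n::finite^'n). (C::real^'n^'n) ** A)"
  by (rule bounded_bilinear.bounded_linear_right[OF bb_matmul])

lemma ode_zero:
  fixes \<alpha> Z :: "real \<Rightarrow> real^'n::finite^'n"
  assumes ca: "continuous_on {0..1} \<alpha>"
    and dZ: "\<And>t. t \<in> {0..1} \<Longrightarrow> (Z has_vector_derivative (\<alpha> t ** Z t)) (at t within {0..1})"
    and u: "u \<in> {0..1}" and Zu: "Z u = 0" and t: "t \<in> {0..1}"
  shows "Z t = 0"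
proof -
  obtain K where K: "K > 0" "\<And>(A::real^'n^'n) (B::real^'n^'n). norm (A ** B) \<le> norm A * norm B * K"
    using bounded_bilinear.pos_bounded[OF bb_matmul[where 'n='n]] by auto
  have "compact (\<alpha> ` {0..1})" using ca compact_continuous_image by blast
  then obtain c where c: "c > 0" "\<And>x. x \<in> {0..1} \<Longrightarrow> norm (\<alpha> x) \<le> c"
  proof -
    obtain c where "c > 0" "\<forall>y\<in>\<alpha> ` {0..1}. norm y \<le> c"
      using compact_imp_bounded[OF \<open>compact (\<alpha> ` {0..1})\<close>] bounded_pos by blast
    then show ?thesis using that by blast
  qed
  define C where "C = 2 * K * c"
  have bnd: "\<bar>Z x \<bullet> (\<alpha> x ** Z x)\<bar> \<le> K * c * (Z x \<bullet> Z x)" if x: "x \<in> {0..1}" for x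
  proof -
    have "\<bar>Z x \<bullet> (\<alpha> x ** Z x)\<bar> \<le> norm (Z x) * norm (\<alpha> x ** Z x)"
      by (rule Cauchy_Schwarz_ineq2)
    also have "\<dots> \<le> norm (Z x) * (norm (\<alpha> x) * norm (Z x) * K)"
      by (rule mult_left_mono[OF K(2)]) simp
    also have "\<dots> \<le> norm (Z x) * (c * norm (Z x) * K)"
      using c(2)[OF x] K(1) by (intro mult_left_mono mult_right_mono) auto
    also have "\<dots> = K * c * (Z x \<bullet> Z x)"
      by (simp add: dot_square_norm power2_eq_square algebra_simps)
    finally show ?thesis .
  qed
  have contZ: "continuous_on {0..1} Z"
    using dZ continuous_on_eq_continuous_within has_vector_derivative_continuous by blast
  have dsq: "((\<lambda>x. Z x \<bullet> Z x) has_real_derivative 2 * (Z x \<bullet> (\<alpha> x ** Z x))) (at x)"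
    if x: "x \<in> {0<..<1}" for x
  proof -
    have "at x within {0..1} = at x" using x by (intro at_within_interior) auto
    then have d: "(Z has_vector_derivative (\<alpha> x ** Z x)) (at x)" using dZ[of x] x by auto
    have "((\<lambda>x. Z x \<bullet> Z x) has_derivative
        (\<lambda>h. Z x \<bullet> (h *\<^sub>R (\<alpha> x ** Z x)) + (h *\<^sub>R (\<alpha> x ** Z x)) \<bullet> Z x)) (at x)"
      using d unfolding has_vector_derivative_def by (intro has_derivative_inner)
    moreover have "(\<lambda>h. Z x \<bullet> (h *\<^sub>R (\<alpha> x ** Z x)) + (h *\<^sub>R (\<alpha> x ** Z x)) \<bullet> Z x)
        = (\<lambda>h. 2 * (Z x \<bullet> (\<alpha> x ** Z x)) * h)"
      by (rule ext) (simp add: inner_commute)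
    ultimately have "((\<lambda>x. Z x \<bullet> Z x) has_derivative (\<lambda>h. 2 * (Z x \<bullet> (\<alpha> x ** Z x)) * h)) (at x)"
      by (rule has_derivative_eq_rhs)
    then show ?thesis unfolding has_field_derivative_def .
  qed
  have ZZ: "Z x \<bullet> Z x \<ge> 0" for x by simp
  have contsq: "continuous_on {0..1} (\<lambda>x. Z x \<bullet> Z x)"
    using contZ by (intro continuous_intros)
  show ?thesis
  proof (cases "u \<le> t")
    case True
    define f where "f x = exp (- C * x) * (Z x \<bullet> Z x)" for x
    have "f u \<ge> f t"
    proof (rule DERIV_nonpos_imp_decreasing_open[OF True])
      fix x assume x: "u < x" "x < t"
      then have x01: "x \<in> {0<..<1}" using u t by auto
      have e: "((\<lambda>x. exp (- C * x)) has_real_derivative (- C * exp (- C * x))) (at x)"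
        by (auto intro!: derivative_eq_intros)
      have "(f has_real_derivative (exp (- C * x) * (2 * (Z x \<bullet> (\<alpha> x ** Z x))) + (- C * exp (- C * x)) * (Z x \<bullet> Z x))) (at x)"
        unfolding f_def using DERIV_mult[OF e dsq[OF x01]] by (simp add: algebra_simps)
      moreover have "exp (- C * x) * (2 * (Z x \<bullet> (\<alpha> x ** Z x))) + (- C * exp (- C * x)) * (Z x \<bullet> Z x) \<le> 0"
      proof -
        have "2 * (Z x \<bullet> (\<alpha> x ** Z x)) \<le> C * (Z x \<bullet> Z x)"
          using bnd[of x] x01 unfolding C_def by auto
        then have "exp (- C * x) * (2 * (Z x \<bullet> (\<alpha> x ** Z x))) \<le> exp (- C * x) * (C * (Z x \<bullet> Z x))"
          by (intro mult_left_mono) auto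
        then show ?thesis by (simp add: algebra_simps)
      qed
      ultimately show "\<exists>y. (f has_real_derivative y) (at x) \<and> y \<le> 0" by blast
    next
      show "continuous_on {u..t} f" unfolding f_def
        using u t by (intro continuous_intros continuous_on_subset[OF contsq]) auto
    qed
    then have "f t \<le> 0" using Zu by (simp add: f_def)
    moreover have "f t \<ge> 0" unfolding f_def by simp
    ultimately have "Z t \<bullet> Z t = 0" unfolding f_def
      by (metis antisym exp_gt_zero inner_ge_zero mult_le_0_iff not_le)
    then show ?thesis by simp
  next
    case False
    then have tu: "t \<le> u" by simp
    define f where "f x = exp (C * x) * (Z x \<bullet> Z x)" for x
    have "f t \<le> f u"
    proof (rule DERIV_nonneg_imp_increasing_open[OF tu])
      fix x assume x: "t < x" "x < u"
      then have x01: "x \<in> {0<..<1}" using u t by auto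
      have e: "((\<lambda>x. exp (C * x)) has_real_derivative (C * exp (C * x))) (at x)"
        by (auto intro!: derivative_eq_intros)
      have "(f has_real_derivative (exp (C * x) * (2 * (Z x \<bullet> (\<alpha> x ** Z x))) + (C * exp (C * x)) * (Z x \<bullet> Z x))) (at x)"
        unfolding f_def using DERIV_mult[OF e dsq[OF x01]] by (simp add: algebra_simps)
      moreover have "exp (C * x) * (2 * (Z x \<bullet> (\<alpha> x ** Z x))) + (C * exp (C * x)) * (Z x \<bullet> Z x) \<ge> 0"
      proof -
        have "2 * (Z x \<bullet> (\<alpha> x ** Z x)) \<ge> - C * (Z x \<bullet> Z x)"
          using bnd[of x] x01 unfolding C_def by auto
        then have "exp (C * x) * (2 * (Z x \<bullet> (\<alpha> x ** Z x))) \<ge> exp (C * x) * (- C * (Z x \<bullet> Z x))"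
          by (intro mult_left_mono) auto
        then show ?thesis by (simp add: algebra_simps)
      qed
      ultimately show "\<exists>y. (f has_real_derivative y) (at x) \<and> y \<ge> 0" by blast
    next
      show "continuous_on {t..u} f" unfolding f_def
        using u t by (intro continuous_intros continuous_on_subset[OF contsq]) auto
    qed
    then have "f t \<le> 0" using Zu by (simp add: f_def)
    moreover have "f t \<ge> 0" unfolding f_def by simp
    ultimately have "Z t \<bullet> Z t = 0" unfolding f_def
      by (metis antisym exp_gt_zero inner_ge_zero mult_le_0_iff not_le)
    then show ?thesis by simp
  qed
qed

lemma flow_comp:
  fixes \<alpha> :: "real \<Rightarrow> real^'n::finite^'n" and F :: "real \<Rightarrow> real \<Rightarrow> real^'n^'n"
  assumes ca: "continuous_on {0..1} \<alpha>"
    and fd: "\<And>s t. s \<in> {0..1} \<Longrightarrow> t \<in> {0..1} \<Longrightarrow>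
        ((\<lambda>t. F s t) has_vector_derivative (\<alpha> t ** F s t)) (at t within {0..1})"
    and fi: "\<And>s. s \<in> {0..1} \<Longrightarrow> F s s = mat 1"
    and s: "s \<in> {0..1}" and u: "u \<in> {0..1}" and t: "t \<in> {0..1}"
  shows "F s t = F u t ** F s u"
proof -
  define Z where "Z t = F s t - F u t ** F s u" for t
  have "Z t = 0"
  proof (rule ode_zero[OF ca _ u _ t])
    fix x :: real assume x: "x \<in> {0..1}"
    have "((\<lambda>t. F u t ** F s u) has_vector_derivative (\<alpha> x ** F u x) ** F s u) (at x within {0..1})"
      using bounded_linear.has_vector_derivative[OF bl_rmul fd[OF u x]] .
    then have "(Z has_vector_derivative (\<alpha> x ** F s x - (\<alpha> x ** F u x) ** F s u)) (at x within {0..1})"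
      unfolding Z_def by (intro has_vector_derivative_diff fd s x)
    moreover have "\<alpha> x ** F s x - (\<alpha> x ** F u x) ** F s u = \<alpha> x ** Z x"
      unfolding Z_def by (simp add: mm_diff_ldistrib matrix_mul_assoc)
    ultimately show "(Z has_vector_derivative \<alpha> x ** Z x) (at x within {0..1})" by simp
  next
    show "Z u = 0" unfolding Z_def using fi[OF u] by simp
  qed
  then show ?thesis unfolding Z_def by simp
qed




lemma mmt_entry: "((M::real^'n::finite^'m) ** transpose N) $ i $ k = M $ i \<bullet> N $ k"
  by (simp add: matrix_matrix_mult_def transpose_def inner_vec_def)

lemma mv_entry: "((M::real^'n::finite^'m) *v x) $ i = M $ i \<bullet> x"
  by (simp add: matrix_vector_mult_def inner_vec_def)

lemma inner_supp_eq:
  fixes y z w :: "real^'n::finite"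
  assumes "\<And>i. i \<notin> S \<Longrightarrow> y $ i = 0" "\<And>i. i \<in> S \<Longrightarrow> z $ i = w $ i"
  shows "y \<bullet> z = y \<bullet> w"
  unfolding inner_vec_def using assms by (intro sum.cong) auto

lemma inner_disj_zero:
  fixes y z :: "real^'n::finite"
  assumes "\<And>i. y $ i = 0 \<or> z $ i = 0"
  shows "y \<bullet> z = 0"
  unfolding inner_vec_def using assms by (intro sum.neutral) (metis inner_zero_left inner_zero_right)

lemma fin_lin_induct:
  fixes c :: "'a::{finite,linorder}"
  assumes "\<And>c. (\<And>c'. c' < c \<Longrightarrow> P c') \<Longrightarrow> P c"
  shows "P c"
proof (induction c rule: measure_induct_rule[of "\<lambda>c. card {i::'a. i < c}"])
  case (less c)
  show ?case
  proof (rule assms)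
    fix c' assume "c' < c"
    then have "{i. i < c'} \<subset> {i. i < c}" by auto
    then have "card {i. i < c'} < card {i. i < c}" by (intro psubset_card_mono) auto
    then show "P c'" using less by blast
  qed
qed

lemma lt_row_split:
  fixes L M :: "real^'d::{finite,linorder}^'d::{finite,linorder}"
  assumes "lower_triangular M"
  shows "L $ i \<bullet> M $ c = (\<Sum>k\<in>{k. k < c}. L$i$k * M$c$k) + L$i$c * M$c$c"
proof -
  have U: "(UNIV::'d set) = {k. k < c} \<union> ({c} \<union> {k. c < k})" by auto
  have "L $ i \<bullet> M $ c = (\<Sum>k\<in>UNIV. L$i$k * M$c$k)" by (simp add: inner_vec_def)
  also have "\<dots> = (\<Sum>k\<in>{k. k < c}. L$i$k * M$c$k) + ((\<Sum>k\<in>{c}. L$i$k * M$c$k) + (\<Sum>k\<in>{k. c < k}. L$i$k * M$c$k))"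
    unfolding U by (subst sum.union_disjoint, auto)+
  also have "(\<Sum>k\<in>{k. c < k}. L$i$k * M$c$k) = 0"
    using assms unfolding lower_triangular_def by (intro sum.neutral) auto
  finally show ?thesis by simp
qed

lemma chol_unique:
  fixes L1 L2 :: "real^'d::{finite,linorder}^'d::{finite,linorder}"
  assumes t1: "lower_triangular L1" and t2: "lower_triangular L2"
    and p1: "\<And>i. L1$i$i > 0" and p2: "\<And>i. L2$i$i > 0"
    and eq: "L1 ** transpose L1 = L2 ** transpose L2"
  shows "L1 = L2"
proof -
  have col: "\<forall>i. L1$i$c = L2$i$c" for c
  proof (induction c rule: fin_lin_induct)
    case (1 c)
    have S: "(\<Sum>k\<in>{k. k < c}. L1$i$k * L1$c$k) = (\<Sum>k\<in>{k. k < c}. L2$i$k * L2$c$k)" for i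
      using 1 by (intro sum.cong) auto
    have e: "L1 $ i \<bullet> L1 $ c = L2 $ i \<bullet> L2 $ c" for i
      using arg_cong[OF eq, of "\<lambda>M. M $ i $ c"] by (simp add: mmt_entry)
    have e2: "L1$i$c * L1$c$c = L2$i$c * L2$c$c" for i
      using e[of i] S[of i] lt_row_split[OF t1, of L1 i c] lt_row_split[OF t2, of L2 i c] by simp
    have cc: "L1$c$c = L2$c$c"
    proof -
      have "L1$c$c ^ 2 = L2$c$c ^ 2" using e2[of c] by (simp add: power2_eq_square)
      then show ?thesis using p1[of c] p2[of c]
        by (metis less_le power2_eq_imp_eq)
    qed
    show ?case
    proof
      fix i
      show "L1$i$c = L2$i$c"
      proof (cases "i < c")
        case True then show ?thesis using t1 t2 unfolding lower_triangular_def by auto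
      next
        case False
        show ?thesis using e2[of i] cc p2[of c] by simp
      qed
    qed
  qed
  show ?thesis using col by (simp add: vec_eq_iff)
qed

lemma posdef_inj:
  fixes A :: "real^'d::{finite,linorder}^'d::{finite,linorder}"
  assumes "pos_def_mat A" "A *v x = 0"
  shows "x = 0"
  using assms unfolding pos_def_mat_def by force

lemma posdef_invertible:
  fixes A :: "real^'d::{finite,linorder}^'d::{finite,linorder}"
  assumes "pos_def_mat A"
  shows "invertible A"
  using posdef_inj[OF assms] matrix_left_invertible_ker invertible_left_inverse by blast

lemma inv_left: "invertible (A::real^'n::finite^'n) \<Longrightarrow> matrix_inv A ** A = mat 1"
  unfolding matrix_inv_def invertible_def by (rule someI2_ex) auto

lemma inv_right: "invertible (A::real^'n::finite^'n) \<Longrightarrow> A ** matrix_inv A = mat 1"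
  unfolding matrix_inv_def invertible_def by (rule someI2_ex) auto

lemma invertible_from_right: "(A::real^'n::finite^'n) ** B = mat 1 \<Longrightarrow> invertible A"
  using invertible_right_inverse by blast

definition dc :: "'a::linorder set \<Rightarrow> bool" where
  "dc S \<longleftrightarrow> (\<forall>i j. j \<in> S \<longrightarrow> i \<le> j \<longrightarrow> i \<in> S)"

lemma inner_mv_transpose: "(v::real^'n::finite) \<bullet> ((M::real^'n^'n) *v x) = (transpose M *v v) \<bullet> x"
  by (metis dot_lmul_matrix transpose_matrix_vector)

lemma chol_step:
  fixes A :: "real^'d::{finite,linorder}^'d::{finite,linorder}"
  assumes symA: "transpose A = A" and pdA: "pos_def_mat A"
  shows "dc S \<Longrightarrow> \<exists>L. lower_triangular L \<and> (\<forall>i\<in>S. L$i$i > 0) \<and> (\<forall>i j. i \<notin> S \<longrightarrow> L$i$j = 0)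
            \<and> (\<forall>i\<in>S. \<forall>k\<in>S. (L ** transpose L)$i$k = A$i$k)"
proof (induction "card S" arbitrary: S rule: less_induct)
  case (less S)
  have sym: "A$i$k = A$k$i" for i k
    using arg_cong[OF symA, of "\<lambda>M. M$i$k"] by (simp add: transpose_def)
  show ?case
  proof (cases "S = {}")
    case True
    show ?thesis by (rule exI[of _ 0]) (simp add: True lower_triangular_def)
  next
    case False
    define j where "j = Max S"
    have jS: "j \<in> S" using False by (simp add: j_def)
    have jmax: "\<And>i. i \<in> S \<Longrightarrow> i \<le> j" by (simp add: j_def)
    define S' where "S' = S - {j}"
    have S'lt: "i \<in> S' \<longleftrightarrow> i < j" for i
    proof
      assume "i \<in> S'"
      then have "i \<in> S" "i \<noteq> j" unfolding S'_def by auto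
      then show "i < j" using jmax[of i] by simp
    next
      assume "i < j"
      then have "i \<in> S" using less.prems jS unfolding dc_def by (meson less_imp_le)
      then show "i \<in> S'" using \<open>i < j\<close> unfolding S'_def by auto
    qed
    have dcS': "dc S'" unfolding dc_def S'lt by auto
    have "card S' < card S" unfolding S'_def by (rule card_Diff1_less[OF finite jS])
    then obtain L' where tL': "lower_triangular L'" and pL': "\<forall>i\<in>S'. L'$i$i > 0"
      and zL': "\<forall>i k. i \<notin> S' \<longrightarrow> L'$i$k = 0"
      and gL': "\<forall>i\<in>S'. \<forall>k\<in>S'. (L' ** transpose L')$i$k = A$i$k"
      using less.hyps dcS' by blast
    have colz: "L'$k$i = 0" if "i \<notin> S'" for k i
    proof (cases "k \<in> S'")
      case True
      then have "k < i" using that S'lt by (meson le_less_trans not_le)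
      then show ?thesis using tL' unfolding lower_triangular_def by blast
    next
      case False then show ?thesis using zL' by blast
    qed
    have rowz: "L' $ i = 0" if "i \<notin> S'" for i using zL' that by (simp add: vec_eq_iff)
    define L2 where "L2 = L' + (\<chi> i k. if i = k \<and> i \<notin> S' then (1::real) else 0)"
    define B where "B = (\<chi> i k. if i \<in> S' \<and> k \<in> S' then A$i$k else if i = k then (1::real) else 0)"
    have rowL2: "L2 $ i = L' $ i + (if i \<notin> S' then axis i 1 else 0)" for i
      by (simp add: L2_def vec_eq_iff axis_def)
    have entL2: "L2 $ k $ i = L' $ k $ i + (if k \<notin> S' \<and> k = i then 1 else 0)" for k i
      by (auto simp add: L2_def)
    have L2B: "L2 ** transpose L2 = B"
    proof -
      have "L2 $ i \<bullet> L2 $ k = B $ i $ k" for i k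
      proof (cases "i \<in> S'")
        case False
        then have "L2 $ i = axis i 1" using rowz[OF False] rowL2[of i] by simp
        then show ?thesis using False colz[OF False, of k] by (auto simp add: inner_axis' entL2 B_def)
      next
        case iS: True
        show ?thesis
        proof (cases "k \<in> S'")
          case False
          then have "L2 $ k = axis k 1" using rowz[OF False] rowL2[of k] by simp
          then show ?thesis using False iS colz[OF False, of i] by (auto simp add: inner_axis entL2 B_def)
        next
          case True
          then show ?thesis using iS gL' rowL2 by (simp add: B_def mmt_entry)
        qed
      qed
      then show ?thesis by (simp add: vec_eq_iff mmt_entry)
    qed
    have pdB: "pos_def_mat B"
      unfolding pos_def_mat_def
    proof (intro allI impI)
      fix x :: "real^'d::{finite,linorder}" assume x0: "x \<noteq> 0"
      define y where "y = (\<chi> i. if i \<in> S' then x$i else 0)"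
      define z where "z = x - y"
      define w1 where "w1 = (\<chi> i. if i \<in> S' then (A *v y)$i else 0)"
      have Bx: "B *v x = w1 + z"
      proof -
        have "(B *v x)$i = w1$i + z$i" for i
        proof (cases "i \<in> S'")
          case True
          have "(B *v x)$i = (\<Sum>k\<in>UNIV. B$i$k * x$k)" by (simp add: matrix_vector_mult_def)
          also have "\<dots> = (\<Sum>k\<in>UNIV. A$i$k * y$k)" using True by (intro sum.cong) (auto simp: B_def y_def)
          finally show ?thesis using True by (simp add: w1_def z_def y_def matrix_vector_mult_def)
        next
          case False
          have "(B *v x)$i = (\<Sum>k\<in>UNIV. if k = i then x$i else 0)"
            unfolding matrix_vector_mult_def vec_lambda_beta using False by (intro sum.cong) (auto simp: B_def)
          also have "\<dots> = x$i" by simp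
          finally have "(B *v x)$i = x$i" .
          then show ?thesis using False by (simp add: w1_def z_def y_def)
        qed
        then show ?thesis by (simp add: vec_eq_iff)
      qed
      have ysupp: "\<And>i. i \<notin> S' \<Longrightarrow> y$i = 0" by (simp add: y_def)
      have zsupp: "\<And>i. i \<in> S' \<Longrightarrow> z$i = 0" by (simp add: y_def z_def)
      have "x \<bullet> (B *v x) = (y + z) \<bullet> (w1 + z)" using Bx by (simp add: z_def)
      also have "\<dots> = y \<bullet> w1 + y \<bullet> z + z \<bullet> w1 + z \<bullet> z" by (simp add: inner_add_left inner_add_right)
      also have "y \<bullet> w1 = y \<bullet> (A *v y)" by (rule inner_supp_eq[of S']) (auto simp: ysupp w1_def)
      also have "y \<bullet> z = 0" by (rule inner_disj_zero) (metis ysupp zsupp)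
      also have "z \<bullet> w1 = 0" by (rule inner_disj_zero) (auto simp: zsupp w1_def)
      finally have eq: "x \<bullet> (B *v x) = y \<bullet> (A *v y) + z \<bullet> z" by simp
      have yA: "y \<bullet> (A *v y) \<ge> 0"
        using pdA unfolding pos_def_mat_def by (cases "y = 0") (auto intro: less_imp_le)
      show "x \<bullet> (B *v x) > 0"
      proof (cases "z = 0")
        case True
        then have "y \<noteq> 0" using x0 by (simp add: z_def)
        then show ?thesis using eq True pdA unfolding pos_def_mat_def by simp
      next
        case False
        then have "z \<bullet> z > 0" by simp
        then show ?thesis using eq yA by linarith
      qed
    qed
    have invB: "invertible B" using posdef_invertible[OF pdB] .
    have invL2: "invertible L2"
    proof (rule invertible_from_right)
      show "L2 ** (transpose L2 ** matrix_inv B) = mat 1"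
        using inv_right[OF invB] L2B by (simp add: matrix_mul_assoc)
    qed
    have invL2T: "invertible (transpose L2)" using transpose_invertible[OF invL2] .
    define a where "a = (\<chi> i. if i \<in> S' then A$i$j else 0)"
    define x where "x = matrix_inv L2 *v a"
    have L2x: "L2 *v x = a" using inv_right[OF invL2] by (simp add: x_def matrix_vector_mul_assoc)
    have L2v: "(L2 *v w)$i = (L' *v w)$i + (if i \<notin> S' then w$i else 0)" for w i
      by (simp add: mv_entry rowL2 inner_add_left inner_axis')
    have L'v0: "(L' *v w)$i = 0" if "i \<notin> S'" for w i using rowz[OF that] by (simp add: mv_entry)
    have xsupp: "x$i = 0" if "i \<notin> S'" for i
      using arg_cong[OF L2x, of "\<lambda>w. w$i"] that L2v[of x i] L'v0[OF that, of x] by (simp add: a_def)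
    have L'x: "(L' *v x)$i = A$i$j" if "i \<in> S'" for i
      using arg_cong[OF L2x, of "\<lambda>w. w$i"] that L2v[of x i] by (simp add: a_def)
    define v where "v = matrix_inv (transpose L2) *v x"
    have L2tv: "transpose L2 *v v = x" using inv_right[OF invL2T] by (simp add: v_def matrix_vector_mul_assoc)
    have L2tv_e: "(transpose L2 *v w)$i = w$i" if "i \<notin> S'" for w i
    proof -
      have "(transpose L2 *v w)$i = (\<Sum>k\<in>UNIV. if k = i then w$i else 0)"
        unfolding matrix_vector_mult_def vec_lambda_beta transpose_def
        using that colz by (intro sum.cong) (auto simp: entL2)
      then show ?thesis by simp
    qed
    have vsupp: "v$i = 0" if "i \<notin> S'" for i
      using arg_cong[OF L2tv, of "\<lambda>w. w$i"] L2tv_e[OF that, of v] xsupp[OF that] by simp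
    have jS': "j \<notin> S'" using S'lt by simp
    define e where "e = axis j (1::real)"
    define u where "u = e - v"
    have "u $ j = 1" using vsupp[OF jS'] by (simp add: u_def e_def)
    then have "u \<noteq> 0" by auto
    then have pu: "u \<bullet> (A *v u) > 0" using pdA unfolding pos_def_mat_def by blast
    have AvB: "(A *v v)$i = (B *v v)$i" if "i \<in> S'" for i
      unfolding matrix_vector_mult_def vec_lambda_beta
      using that vsupp by (intro sum.cong) (auto simp: B_def)
    have h1: "v \<bullet> (A *v v) = x \<bullet> x"
    proof -
      have 1: "v \<bullet> (A *v v) = v \<bullet> (B *v v)" by (rule inner_supp_eq[of S']) (auto simp: vsupp AvB)
      have "B *v v = L2 *v x" using L2B L2tv by (metis matrix_vector_mul_assoc)
      then have "v \<bullet> (B *v v) = v \<bullet> (L2 *v x)" by simp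
      also have "v \<bullet> (L2 *v x) = x \<bullet> x" by (metis inner_mv_transpose L2tv)
      finally show ?thesis using 1 by simp
    qed
    have Ae: "(A *v e)$i = A$i$j" for i by (simp add: e_def mv_entry inner_axis)
    have h2: "v \<bullet> (A *v e) = x \<bullet> x"
    proof -
      have "v \<bullet> (A *v e) = v \<bullet> a" by (rule inner_supp_eq[of S']) (auto simp: vsupp Ae a_def)
      also have "\<dots> = v \<bullet> (L2 *v x)" using L2x by simp
      also have "\<dots> = x \<bullet> x" by (metis inner_mv_transpose L2tv)
      finally show ?thesis .
    qed
    have h3: "e \<bullet> (A *v v) = v \<bullet> (A *v e)"
      by (metis inner_mv_transpose symA inner_commute)
    have ew: "e \<bullet> w = w$j" for w by (simp add: e_def inner_axis')
    have h4: "e \<bullet> (A *v e) = A$j$j" by (simp only: ew Ae)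
    have "u \<bullet> (A *v u) = A$j$j - x \<bullet> x"
    proof -
      have "u \<bullet> (A *v u) = e \<bullet> (A *v e) - e \<bullet> (A *v v) - (v \<bullet> (A *v e) - v \<bullet> (A *v v))"
        unfolding u_def by (simp only: matrix_vector_mult_diff_distrib inner_diff_left inner_diff_right)
      then show ?thesis using h1 h2 h3 h4 by linarith
    qed
    then have pos: "A$j$j - x \<bullet> x > 0" using pu by simp
    define t where "t = sqrt (A$j$j - x \<bullet> x)"
    have t0: "t > 0" using pos by (simp add: t_def)
    have tsq: "t * t = A$j$j - x \<bullet> x" using pos by (simp add: t_def)
    define L where "L = (\<chi> i. if i = j then x + t *\<^sub>R e else L' $ i)"
    have Lj: "L $ j = x + t *\<^sub>R e" by (simp add: L_def)
    have Li: "L $ i = L' $ i" if "i \<noteq> j" for i using that by (simp add: L_def)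
    have tL: "lower_triangular L"
      unfolding lower_triangular_def
    proof (intro allI impI)
      fix i k :: 'd assume ik: "i < k"
      show "L$i$k = 0"
      proof (cases "i = j")
        case True
        then have "k \<notin> S'" using ik S'lt by auto
        then show ?thesis using True ik xsupp by (simp add: Lj e_def axis_def)
      next
        case False
        then show ?thesis using tL' ik Li unfolding lower_triangular_def by simp
      qed
    qed
    have gram: "L$i \<bullet> L$k = A$i$k" if "i \<in> S" "k \<in> S" for i k
    proof -
      have cs: "i \<in> S' \<or> i = j" "k \<in> S' \<or> k = j" using that S'_def by auto
      have xe: "x \<bullet> e = 0" using xsupp[OF jS'] by (simp add: e_def inner_axis)
      have Le: "L' $ i \<bullet> e = 0" for i using colz[OF jS', of i] by (simp add: e_def inner_axis)
      have r1: "L' $ i \<bullet> (x + t *\<^sub>R e) = A$i$j" if "i \<in> S'" for i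
        using L'x[OF that] Le[of i] by (simp add: inner_add_right mv_entry)
      show ?thesis
      proof (cases "i = j")
        case True
        show ?thesis
        proof (cases "k = j")
          case True
          have "(x + t *\<^sub>R e) \<bullet> (x + t *\<^sub>R e) = x \<bullet> x + t * t"
            using xe by (simp add: inner_add_left inner_add_right inner_commute e_def)
          then show ?thesis using \<open>i = j\<close> True tsq Lj by simp
        next
          case False
          then have "k \<in> S'" using cs by auto
          then show ?thesis using \<open>i = j\<close> False Lj Li r1[of k] sym[of k j] by (simp add: inner_commute)
        qed
      next
        case False
        then have iS: "i \<in> S'" using cs by auto
        show ?thesis
        proof (cases "k = j")
          case True
          then show ?thesis using iS False Lj Li r1[of i] by simp
        next
          case kF: False
          then have "k \<in> S'" using cs by auto
          then show ?thesis using iS False kF Li gL' by (simp add: mmt_entry)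
        qed
      qed
    qed
    show ?thesis
    proof (rule exI[of _ L], intro conjI ballI allI impI)
      show "lower_triangular L" by (rule tL)
    next
      fix i assume "i \<in> S"
      then show "L$i$i > 0"
        using pL' t0 xsupp[OF jS'] Li S'_def by (cases "i = j") (auto simp: Lj e_def)
    next
      fix i k assume "i \<notin> S"
      then have "i \<noteq> j" "i \<notin> S'" using jS S'_def by auto
      then show "L$i$k = 0" using zL' Li by simp
    next
      fix i k assume "i \<in> S" "k \<in> S"
      then show "(L ** transpose L)$i$k = A$i$k" using gram by (simp add: mmt_entry)
    qed
  qed
qed

lemma cholesky_props:
  fixes A :: "real^'d::{finite,linorder}^'d::{finite,linorder}"
  assumes symA: "transpose A = A" and pdA: "pos_def_mat A"
  shows "lower_triangular (cholesky A) \<and> (\<forall>i. cholesky A $i$i > 0) \<and> cholesky A ** transpose (cholesky A) = A"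
proof -
  obtain L where L: "lower_triangular L" "\<forall>i\<in>UNIV. L$i$i > 0"
      "\<forall>i\<in>UNIV. \<forall>k\<in>UNIV. (L ** transpose L)$i$k = A$i$k"
    using chol_step[OF symA pdA, of UNIV] unfolding dc_def by blast
  have LL: "L ** transpose L = A" using L(3) by (simp add: vec_eq_iff)
  have ex1: "\<exists>!L. lower_triangular L \<and> (\<forall>i. L $ i $ i > 0) \<and> L ** transpose L = A"
  proof (rule ex1I[of _ L])
    show "lower_triangular L \<and> (\<forall>i. L $ i $ i > 0) \<and> L ** transpose L = A" using L LL by auto
  next
    fix M assume "lower_triangular M \<and> (\<forall>i. M $ i $ i > 0) \<and> M ** transpose M = A"
    then show "M = L" using chol_unique[of M L] L LL by auto
  qed
  show ?thesis unfolding cholesky_def using theI'[OF ex1] .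
qed




type_synonym 'd M = "real^'d^'d"

lemma inv_unique: "(A::real^'n::finite^'n) ** B = mat 1 \<Longrightarrow> matrix_inv A = B"
proof -
  assume AB: "A ** B = mat 1"
  then have iA: "invertible A" by (rule invertible_from_right)
  have "matrix_inv A = matrix_inv A ** (A ** B)" using AB by simp
  also have "\<dots> = B" using inv_left[OF iA] by (simp add: matrix_mul_assoc)
  finally show ?thesis .
qed

lemma invertible_inv: "invertible (A::real^'n::finite^'n) \<Longrightarrow> invertible (matrix_inv A)"
  using inv_left invertible_from_right by blast

lemma inv_inv: "invertible (A::real^'n::finite^'n) \<Longrightarrow> matrix_inv (matrix_inv A) = A"
  using inv_left inv_unique by blast

lemma inv_transpose: "invertible (A::real^'n::finite^'n) \<Longrightarrow> matrix_inv (transpose A) = transpose (matrix_inv A)"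
  by (rule inv_unique) (metis inv_left matrix_transpose_mul transpose_mat)

lemma cancel1: "invertible (A::real^'n::finite^'n) \<Longrightarrow> X ** matrix_inv A ** A = X"
  by (metis inv_left matrix_mul_assoc matrix_mul_rid)
lemma cancel2: "invertible (A::real^'n::finite^'n) \<Longrightarrow> X ** A ** matrix_inv A = X"
  by (metis inv_right matrix_mul_assoc matrix_mul_rid)
lemma cancel3: "invertible (A::real^'n::finite^'n) \<Longrightarrow> matrix_inv A ** (A ** X) = X"
  by (metis inv_left matrix_mul_assoc matrix_mul_lid)
lemma cancel4: "invertible (A::real^'n::finite^'n) \<Longrightarrow> A ** (matrix_inv A ** X) = X"
  by (metis inv_right matrix_mul_assoc matrix_mul_lid)
lemma cancel5: "invertible (A::real^'n::finite^'n) \<Longrightarrow> matrix_inv A ** A ** X = X"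
  by (metis inv_left matrix_mul_lid)
lemma cancel6: "invertible (A::real^'n::finite^'n) \<Longrightarrow> A ** matrix_inv A ** X = X"
  by (metis inv_right matrix_mul_lid)

lemma inv_mult:
  fixes A B :: "real^'n::finite^'n"
  assumes "invertible A" "invertible B"
  shows "matrix_inv (A ** B) = matrix_inv B ** matrix_inv A"
  by (rule inv_unique) (simp add: matrix_mul_assoc cancel2 inv_right assms)

lemma inv_sym: "transpose (A::real^'n::finite^'n) = A \<Longrightarrow> invertible A \<Longrightarrow> transpose (matrix_inv A) = matrix_inv A"
  by (metis inv_transpose)

lemma transpose_add: "transpose ((A::real^'n::finite^'n) + B) = transpose A + transpose B"
  by (simp add: transpose_def vec_eq_iff)

lemma posdef_congr:
  fixes G P :: "real^'d::{finite,linorder}^'d::{finite,linorder}"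
  assumes iG: "invertible G" and pP: "pos_def_mat P"
  shows "pos_def_mat (G ** P ** transpose G)"
  unfolding pos_def_mat_def
proof (intro allI impI)
  fix x :: "real^'d::{finite,linorder}" assume x: "x \<noteq> 0"
  have "transpose G *v x \<noteq> 0"
    using x inj_matrix_vector_mult[OF transpose_invertible[OF iG]] by (metis inj_eq matrix_vector_mult_0_right)
  then have "(transpose G *v x) \<bullet> (P *v (transpose G *v x)) > 0" using pP unfolding pos_def_mat_def by blast
  then show "x \<bullet> ((G ** P ** transpose G) *v x) > 0"
    by (metis inner_mv_transpose matrix_vector_mul_assoc)
qed

lemma posdef_uncongr:
  fixes G P :: "real^'d::{finite,linorder}^'d::{finite,linorder}"
  assumes iG: "invertible G" and pP: "pos_def_mat (G ** P ** transpose G)"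
  shows "pos_def_mat P"
proof -
  have e1: "matrix_inv G ** G = mat 1" using inv_left[OF iG] .
  have e2: "transpose G ** transpose (matrix_inv G) = mat 1" by (metis e1 matrix_transpose_mul transpose_mat)
  have "matrix_inv G ** (G ** P ** transpose G) ** transpose (matrix_inv G)
     = (matrix_inv G ** G) ** P ** (transpose G ** transpose (matrix_inv G))" by (simp add: matrix_mul_assoc)
  then have "P = matrix_inv G ** (G ** P ** transpose G) ** transpose (matrix_inv G)"
    by (simp add: e1 e2)
  then show ?thesis using posdef_congr[OF invertible_inv[OF iG] pP] by simp
qed

lemma posdef_inv:
  fixes P :: "real^'d::{finite,linorder}^'d::{finite,linorder}"
  assumes pP: "pos_def_mat P"
  shows "pos_def_mat (matrix_inv P)"
  unfolding pos_def_mat_def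
proof (intro allI impI)
  fix x :: "real^'d::{finite,linorder}" assume x: "x \<noteq> 0"
  have iP: "invertible P" using posdef_invertible[OF pP] .
  define y where "y = matrix_inv P *v x"
  have Py: "P *v y = x" using iP by (simp add: y_def matrix_vector_mul_assoc inv_right)
  have "y \<noteq> 0" using Py x by auto
  then have "y \<bullet> (P *v y) > 0" using pP unfolding pos_def_mat_def by blast
  then show "x \<bullet> (matrix_inv P *v x) > 0" using Py by (simp add: y_def[symmetric] inner_commute)
qed

lemma posdef_add:
  fixes P Q :: "real^'d::{finite,linorder}^'d::{finite,linorder}"
  assumes "pos_def_mat P" "pos_def_mat Q"
  shows "pos_def_mat (P + Q)"
  using assms unfolding pos_def_mat_def by (simp add: matrix_vector_mult_add_rdistrib inner_add_right add_pos_pos)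

lemma S_props:
  fixes A B :: "real^'d::{finite,linorder}^'d::{finite,linorder}"
  assumes sA: "transpose A = A" and sB: "transpose B = B" and pA: "pos_def_mat A" and pB: "pos_def_mat B"
  shows "(A ** matrix_inv (A + B) ** B) ** (matrix_inv A + matrix_inv B) = mat 1"
    "pos_def_mat (A ** matrix_inv (A + B) ** B)"
    "transpose (A ** matrix_inv (A + B) ** B) = A ** matrix_inv (A + B) ** B"
proof -
  have iA: "invertible A" using posdef_invertible[OF pA] .
  have iB: "invertible B" using posdef_invertible[OF pB] .
  have iAB: "invertible (A + B)" using posdef_invertible[OF posdef_add[OF pA pB]] .
  define S where "S = A ** matrix_inv (A + B) ** B"
  define Q where "Q = matrix_inv A + matrix_inv B"
  have 1: "B ** matrix_inv A + mat 1 = (A + B) ** matrix_inv A"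
    by (simp add: mm_add_rdistrib inv_right iA add.commute)
  have "S ** Q = A ** (matrix_inv (A + B) ** (B ** matrix_inv A + mat 1))"
    by (simp add: S_def Q_def matrix_mul_assoc[symmetric] matrix_add_ldistrib inv_right iB)
  also have "\<dots> = mat 1" unfolding 1 using iA iAB by (simp add: cancel3 inv_right)
  finally have SQ: "S ** Q = mat 1" .
  then show "(A ** matrix_inv (A + B) ** B) ** (matrix_inv A + matrix_inv B) = mat 1"
    by (simp add: S_def Q_def)
  have QS: "Q ** S = mat 1" using SQ matrix_left_right_inverse by blast
  then have SiQ: "S = matrix_inv Q" using inv_unique by metis
  have pQ: "pos_def_mat Q" unfolding Q_def by (intro posdef_add posdef_inv pA pB)
  have sQ: "transpose Q = Q" unfolding Q_def transpose_add using inv_sym[OF sA iA] inv_sym[OF sB iB] by simp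
  show "pos_def_mat (A ** matrix_inv (A + B) ** B)" using posdef_inv[OF pQ] SiQ by (simp add: S_def)
  show "transpose (A ** matrix_inv (A + B) ** B) = A ** matrix_inv (A + B) ** B"
    using inv_sym[OF sQ posdef_invertible[OF pQ]] SiQ by (simp add: S_def)
qed

lemma cell_alg:
  fixes G A B \<sigma> C Xl Xm Xr :: "real^'d::{finite,linorder}^'d::{finite,linorder}"
  assumes iG: "invertible G" and sA: "transpose A = A" and sB: "transpose B = B"
    and pA: "pos_def_mat A" and pB: "pos_def_mat B"
    and sig: "\<sigma> ** transpose \<sigma> = G ** (A ** matrix_inv (A + B) ** B) ** transpose G"
  shows "invertible \<sigma>"
    "transpose (transpose G ** transpose (matrix_inv \<sigma>)) ** (A ** (matrix_inv A ** matrix_inv G ** \<sigma>)) = mat 1"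
    "Xm - Xl = A ** C \<Longrightarrow> Xr - Xm = B ** C \<Longrightarrow>
     transpose (transpose G ** transpose (matrix_inv \<sigma>)) ** Xm
     - transpose (matrix_inv A ** matrix_inv G ** \<sigma>) ** Xl
     - transpose (matrix_inv B ** matrix_inv G ** \<sigma>) ** Xr = 0"
proof -
  have iA: "invertible A" using posdef_invertible[OF pA] .
  have iB: "invertible B" using posdef_invertible[OF pB] .
  define S where "S = A ** matrix_inv (A + B) ** B"
  define Q where "Q = matrix_inv A + matrix_inv B"
  have SQ: "S ** Q = mat 1" using S_props[OF sA sB pA pB] by (simp add: S_def Q_def)
  have iGT: "invertible (transpose G)" using transpose_invertible[OF iG] .
  have tiG: "transpose (matrix_inv G) = matrix_inv (transpose G)" using inv_transpose[OF iG] by simp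
  define Y where "Y = matrix_inv G ** \<sigma>"
  have YY: "Y ** transpose Y = S"
  proof -
    have "Y ** transpose Y = matrix_inv G ** (\<sigma> ** transpose \<sigma>) ** transpose (matrix_inv G)"
      by (simp add: Y_def matrix_transpose_mul matrix_mul_assoc)
    also have "\<dots> = matrix_inv G ** G ** S ** (transpose G ** matrix_inv (transpose G))"
      unfolding sig tiG S_def by (simp add: matrix_mul_assoc)
    also have "\<dots> = S" using iG iGT by (simp add: cancel5 inv_right)
    finally show ?thesis .
  qed
  have YQ: "Y ** (transpose Y ** Q) = mat 1" using YY SQ by (simp add: matrix_mul_assoc)
  then have iY: "invertible Y" by (rule invertible_from_right)
  have iYe: "matrix_inv Y = transpose Y ** Q" using YQ by (rule inv_unique)
  have "\<sigma> = G ** Y" using iG by (simp add: Y_def cancel4)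
  then show isg: "invertible \<sigma>" using invertible_mult[OF iG iY] by simp
  have tM: "transpose (transpose G ** transpose (matrix_inv \<sigma>)) = matrix_inv \<sigma> ** G"
    by (simp add: matrix_transpose_mul)
  have tM2: "matrix_inv \<sigma> ** G = transpose Y ** Q"
  proof -
    have "matrix_inv Y = matrix_inv \<sigma> ** G"
      unfolding Y_def using inv_mult[OF invertible_inv[OF iG] isg] inv_inv[OF iG] by simp
    then show ?thesis using iYe by simp
  qed
  have tL: "transpose (matrix_inv A ** matrix_inv G ** \<sigma>) = transpose Y ** matrix_inv A"
    using inv_sym[OF sA iA] by (simp add: Y_def matrix_transpose_mul matrix_mul_assoc)
  have tR: "transpose (matrix_inv B ** matrix_inv G ** \<sigma>) = transpose Y ** matrix_inv B"
    using inv_sym[OF sB iB] by (simp add: Y_def matrix_transpose_mul matrix_mul_assoc)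
  show "transpose (transpose G ** transpose (matrix_inv \<sigma>)) ** (A ** (matrix_inv A ** matrix_inv G ** \<sigma>)) = mat 1"
    unfolding tM using iA iG isg by (simp add: matrix_mul_assoc cancel2 inv_left)
  assume d1: "Xm - Xl = A ** C" and d2: "Xr - Xm = B ** C"
  have "Q ** Xm - matrix_inv A ** Xl - matrix_inv B ** Xr
      = matrix_inv A ** (Xm - Xl) - matrix_inv B ** (Xr - Xm)"
    by (simp add: Q_def mm_add_rdistrib mm_diff_ldistrib)
  also have "\<dots> = 0" unfolding d1 d2 using iA iB by (simp add: cancel3)
  finally have z: "Q ** Xm - matrix_inv A ** Xl - matrix_inv B ** Xr = 0" .
  have "transpose (transpose G ** transpose (matrix_inv \<sigma>)) ** Xm
     - transpose (matrix_inv A ** matrix_inv G ** \<sigma>) ** Xl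
     - transpose (matrix_inv B ** matrix_inv G ** \<sigma>) ** Xr
     = transpose Y ** (Q ** Xm - matrix_inv A ** Xl - matrix_inv B ** Xr)"
    unfolding tM tM2 tL tR by (simp add: mm_diff_ldistrib matrix_mul_assoc)
  then show "transpose (transpose G ** transpose (matrix_inv \<sigma>)) ** Xm
     - transpose (matrix_inv A ** matrix_inv G ** \<sigma>) ** Xl
     - transpose (matrix_inv B ** matrix_inv G ** \<sigma>) ** Xr = 0" using z by simp
qed

lemma root_alg:
  fixes G H \<sigma> :: "real^'d::{finite,linorder}^'d::{finite,linorder}"
  assumes iG: "invertible G" and sH: "transpose H = H" and iH: "invertible H"
    and sig: "\<sigma> ** transpose \<sigma> = G ** H ** transpose G"
  shows "transpose (matrix_inv H ** matrix_inv G ** \<sigma>) ** (H ** (matrix_inv H ** matrix_inv G ** \<sigma>)) = mat 1"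
proof -
  have iGT: "invertible (transpose G)" using transpose_invertible[OF iG] .
  have iGHG: "invertible (G ** H ** transpose G)" by (intro invertible_mult iG iH iGT)
  have isg: "invertible \<sigma>" using sig iGHG invertible_right_inverse by (metis matrix_mul_assoc)
  have isT: "invertible (transpose \<sigma>)" using transpose_invertible[OF isg] .
  have "transpose (matrix_inv H ** matrix_inv G ** \<sigma>) ** (H ** (matrix_inv H ** matrix_inv G ** \<sigma>))
      = transpose \<sigma> ** (transpose (matrix_inv G) ** matrix_inv H ** matrix_inv G) ** \<sigma>"
    using inv_sym[OF sH iH] iH by (simp add: matrix_transpose_mul matrix_mul_assoc cancel2)
  also have "transpose (matrix_inv G) ** matrix_inv H ** matrix_inv G = matrix_inv (\<sigma> ** transpose \<sigma>)"
    unfolding sig using iG iH iGT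
    by (simp add: inv_mult invertible_mult inv_transpose matrix_mul_assoc)
  also have "\<dots> = matrix_inv (transpose \<sigma>) ** matrix_inv \<sigma>" using inv_mult[OF isg isT] .
  finally show ?thesis using isg isT by (simp add: matrix_mul_assoc cancel2 inv_right inv_left)
qed




locale part =
  fixes lp mp rp :: "nat \<Rightarrow> nat \<Rightarrow> real"
  assumes part_init: "lp 1 0 = 0" "rp 1 0 = 1"
    and part_lr: "\<And>n k. n \<ge> 1 \<Longrightarrow> k < 2^(n-1) \<Longrightarrow> lp n k < mp n k \<and> mp n k < rp n k"
    and part_left: "\<And>n k. n \<ge> 1 \<Longrightarrow> k < 2^(n-1) \<Longrightarrow>
        lp (n+1) (2*k) = lp n k \<and> rp (n+1) (2*k) = mp n k"
    and part_right: "\<And>n k. n \<ge> 1 \<Longrightarrow> k < 2^(n-1) \<Longrightarrow>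
        lp (n+1) (2*k+1) = mp n k \<and> rp (n+1) (2*k+1) = rp n k"
begin

definition valid :: "nat \<Rightarrow> nat \<Rightarrow> bool" where
  "valid n k \<longleftrightarrow> n \<ge> 1 \<and> k < 2^(n-1)"

lemma lr: "valid n k \<Longrightarrow> lp n k < mp n k \<and> mp n k < rp n k"
  using part_lr unfolding valid_def by blast

lemma valid_parent: "valid (n+1) q \<Longrightarrow> n \<ge> 1 \<Longrightarrow> valid n (q div 2)"
  unfolding valid_def by (cases n) (auto simp: less_mult_imp_div_less)

lemma step_even: "valid (n+1) q \<Longrightarrow> n \<ge> 1 \<Longrightarrow> even q \<Longrightarrow>
    lp (n+1) q = lp n (q div 2) \<and> rp (n+1) q = mp n (q div 2)"
  using part_left[of n "q div 2"] valid_parent[of n q] unfolding valid_def by auto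

lemma step_odd: "valid (n+1) q \<Longrightarrow> n \<ge> 1 \<Longrightarrow> odd q \<Longrightarrow>
    lp (n+1) q = mp n (q div 2) \<and> rp (n+1) q = rp n (q div 2)"
  using part_right[of n "q div 2"] valid_parent[of n q] unfolding valid_def
  by (metis odd_two_times_div_two_succ)

lemma step_sub: "valid (n+1) q \<Longrightarrow> n \<ge> 1 \<Longrightarrow>
    lp n (q div 2) \<le> lp (n+1) q \<and> rp (n+1) q \<le> rp n (q div 2)"
  using step_even[of n q] step_odd[of n q] lr[OF valid_parent[of n q]] by (cases "even q") auto

lemma unit: "valid n k \<Longrightarrow> 0 \<le> lp n k \<and> rp n k \<le> 1"
proof (induction n arbitrary: k)
  case 0 then show ?case by (simp add: valid_def)
next
  case (Suc n)
  show ?case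
  proof (cases "n = 0")
    case True then show ?thesis using part_init Suc.prems by (simp add: valid_def)
  next
    case False
    then have "valid n (k div 2)" using valid_parent[of n k] Suc by simp
    then show ?thesis using Suc.IH[of "k div 2"] step_sub[of n k] Suc False by force
  qed
qed

lemma sub:
  "valid (n+j) q \<Longrightarrow> n \<ge> 1 \<Longrightarrow> valid n (q div 2^j) \<and>
    lp n (q div 2^j) \<le> lp (n+j) q \<and> rp (n+j) q \<le> rp n (q div 2^j)"
proof (induction j arbitrary: q)
  case 0 then show ?case by simp
next
  case (Suc j)
  have v: "valid (n+j) (q div 2)" using valid_parent[of "n+j" q] Suc.prems by simp
  have e: "q div 2 div 2^j = q div 2^(Suc j)" by (simp add: div_mult2_eq)
  show ?case using Suc.IH[OF v Suc.prems(2)] step_sub[of "n+j" q] Suc.prems unfolding e by force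
qed

lemma consec: "valid n (k+1) \<Longrightarrow> lp n (k+1) = rp n k"
proof (induction n arbitrary: k)
  case 0 then show ?case by (simp add: valid_def)
next
  case (Suc n)
  show ?case
  proof (cases "n = 0")
    case True then show ?thesis using Suc.prems by (simp add: valid_def)
  next
  case nz: False
  then have Suc_hyps: "n \<ge> 1" by simp
  show ?thesis
  proof (cases "even k")
    case True
    then obtain c where c: "k = 2*c" by blast
    have vc: "valid n c" using Suc.prems c Suc_hyps unfolding valid_def by (cases n) auto
    then show ?thesis using part_left[of n c] part_right[of n c] c Suc_hyps unfolding valid_def by simp
  next
    case False
    then obtain c where c: "k = 2*c+1" using oddE by blast
    have vc: "valid n (c+1)" using Suc.prems c Suc_hyps unfolding valid_def by (cases n) auto
    have vc': "valid n c" using vc unfolding valid_def by auto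
    have "lp (Suc n) (k+1) = lp n (c+1)"
      using part_left[of n "c+1"] vc c unfolding valid_def by (simp add: algebra_simps)
    also have "\<dots> = rp n c" using Suc.IH[OF vc] .
    also have "\<dots> = rp (Suc n) k" using part_right[of n c] vc' c unfolding valid_def by simp
    finally show ?thesis .
  qed
  qed
qed

lemma sep: "valid n k \<Longrightarrow> valid n k' \<Longrightarrow> k < k' \<Longrightarrow> rp n k \<le> lp n k'"
proof (induction "k' - k" arbitrary: k' rule: nat_less_induct)
  case 1
  show ?case
  proof (cases "k' = k + 1")
    case True then show ?thesis using consec[of n k] 1 by simp
  next
    case False
    then have "k < k' - 1" using 1 by simp
    have v: "valid n (k' - 1)" using 1 unfolding valid_def by (auto simp: less_imp_diff_less)
    have lt: "k' - 1 - k < k' - k" using \<open>k < k' - 1\<close> by simp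
    have "rp n k \<le> lp n (k' - 1)" using 1(1) 1(2) v \<open>k < k' - 1\<close> lt by blast
    also have "\<dots> \<le> rp n (k' - 1)" using lr[OF v] by simp
    also have "\<dots> = lp n k'" using consec[of n "k'-1"] 1 \<open>k < k' - 1\<close> by simp
    finally show ?thesis .
  qed
qed

lemma child:
  assumes v: "valid p q" and pn: "n < p" and n1: "n \<ge> 1"
  shows "valid n (q div 2^(p-n)) \<and>
    ((lp n (q div 2^(p-n)) \<le> lp p q \<and> rp p q \<le> mp n (q div 2^(p-n))) \<or>
     (mp n (q div 2^(p-n)) \<le> lp p q \<and> rp p q \<le> rp n (q div 2^(p-n))))"
proof -
  define c where "c = q div 2^(p-n-1)"
  have pe: "p = (n+1) + (p-n-1)" using pn by simp
  have s1: "valid (n+1) c \<and> lp (n+1) c \<le> lp p q \<and> rp p q \<le> rp (n+1) c"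
    using sub[of "n+1" "p-n-1" q] v pe unfolding c_def by simp
  have ce: "c div 2 = q div 2^(p-n)" unfolding c_def using pn
    by (simp add: div_mult2_eq[symmetric]) (metis Suc_diff_Suc power_Suc2)
  show ?thesis
  proof (cases "even c")
    case True
    then show ?thesis using step_even[of n c] s1 n1 valid_parent[of n c] ce by auto
  next
    case False
    then show ?thesis using step_odd[of n c] s1 n1 valid_parent[of n c] ce by auto
  qed
qed

lemma far:
  assumes vn: "valid n k" and vp: "valid p q" and ne: "(p,q) \<noteq> (n,k)"
    and nc: "\<not> (n < p \<and> q div 2^(p-n) = k)"
    and t: "t \<in> {lp p q, mp p q, rp p q}"
  shows "t \<le> lp n k \<or> rp n k \<le> t"
proof -
  have tin: "lp p q \<le> t \<and> t \<le> rp p q" using t lr[OF vp] by auto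
  have n1: "n \<ge> 1" "p \<ge> 1" using vn vp unfolding valid_def by auto
  show ?thesis
  proof (cases "p \<le> n")
    case True
    define q0 where "q0 = k div 2^(n-p)"
    have s: "valid p q0 \<and> lp p q0 \<le> lp n k \<and> rp n k \<le> rp p q0"
      using sub[of p "n-p" k] vn True n1 unfolding q0_def by simp
    consider "q < q0" | "q0 < q" | "q = q0" by linarith
    then show ?thesis
    proof cases
      case 1
      then show ?thesis using sep[of p q q0] vp s tin by auto
    next
      case 2
      then show ?thesis using sep[of p q0 q] vp s tin by auto
    next
      case 3
      then have "p < n" using ne True q0_def by auto
      then have c: "(lp p q \<le> lp n k \<and> rp n k \<le> mp p q) \<or> (mp p q \<le> lp n k \<and> rp n k \<le> rp p q)"
        using child[of n k p] vn n1 3 unfolding q0_def by auto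
      then show ?thesis using t lr[OF vp] lr[OF vn] by auto
    qed
  next
    case False
    define q0 where "q0 = q div 2^(p-n)"
    have s: "valid n q0 \<and> lp n q0 \<le> lp p q \<and> rp p q \<le> rp n q0"
      using sub[of n "p-n" q] vp False n1 unfolding q0_def by simp
    have "q0 \<noteq> k" using nc False q0_def by auto
    then consider "q0 < k" | "k < q0" by linarith
    then show ?thesis
    proof cases
      case 1
      then show ?thesis using sep[of n q0 k] vn s tin by auto
    next
      case 2
      then show ?thesis using sep[of n k q0] vn s tin by auto
    qed
  qed
qed

end



lemma integral_blin:
  fixes f f' :: "'a::euclidean_space \<Rightarrow> 'a"
  assumes bf: "bounded_linear f" and bf': "bounded_linear f'" and inv: "\<And>x. f' (f x) = x"
  shows "integral S (\<lambda>w. f (h w)) = f (integral S h)"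
proof (cases "h integrable_on S")
  case True
  then show ?thesis using integral_linear[OF True bf] by (simp add: o_def)
next
  case False
  have "\<not> (\<lambda>w. f (h w)) integrable_on S"
  proof
    assume "(\<lambda>w. f (h w)) integrable_on S"
    then have "(\<lambda>w. f' (f (h w))) integrable_on S" using integrable_linear[OF _ bf'] by (simp add: o_def)
    then show False using False inv by simp
  qed
  then show ?thesis using False by (simp add: not_integrable_integral linear_0[OF bounded_linear.linear[OF bf]])
qed

lemma bl_sandwich: "bounded_linear (\<lambda>X::real^'n::finite^'n. (G::real^'n^'n) ** X ** (H::real^'n^'n))"
  using bounded_linear_compose[OF bl_rmul[of H] bl_lmul[of G]] by (simp add: o_def)

lemma bl_transpose: "bounded_linear (transpose :: real^'n::finite^'n \<Rightarrow> _)"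
proof -
  have "linear (transpose :: real^'n::finite^'n \<Rightarrow> _)"
    by (intro linearI) (simp_all add: transpose_def vec_eq_iff)
  then show ?thesis using linear_conv_bounded_linear by blast
qed

lemma sigma_arg:
  fixes G A B C :: "real^'d::{finite,linorder}^'d::{finite,linorder}"
  assumes iG: "invertible G" and iC: "invertible C"
  shows "(G ** A ** transpose G) ** matrix_inv (G ** C ** transpose G) ** (G ** B ** transpose G)
         = G ** (A ** matrix_inv C ** B) ** transpose G"
proof -
  have iGT: "invertible (transpose G)" using transpose_invertible[OF iG] .
  have "matrix_inv (G ** C ** transpose G) = matrix_inv (transpose G) ** matrix_inv C ** matrix_inv G"
    using iG iC iGT by (simp add: inv_mult invertible_mult matrix_mul_assoc)
  then show ?thesis using iG iGT by (simp add: matrix_mul_assoc cancel2 cancel1)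
qed

locale setting = part lp mp rp for lp mp rp :: "nat \<Rightarrow> nat \<Rightarrow> real" +
  fixes \<alpha> :: "real \<Rightarrow> real^'d::{finite,linorder}^'d::{finite,linorder}"
    and sG :: "real \<Rightarrow> real^'m::finite^'d::{finite,linorder}"
    and F :: "real \<Rightarrow> real \<Rightarrow> real^'d::{finite,linorder}^'d::{finite,linorder}"
  assumes cont_alpha: "continuous_on {0..1} \<alpha>"
    and flow_deriv: "\<And>s t. s \<in> {0..1} \<Longrightarrow> t \<in> {0..1} \<Longrightarrow>
        ((\<lambda>t. F s t) has_vector_derivative (\<alpha> t ** F s t)) (at t within {0..1})"
    and flow_init: "\<And>s. s \<in> {0..1} \<Longrightarrow> F s s = mat 1"
    and nondeg: "\<And>u v. 0 \<le> u \<Longrightarrow> u < v \<Longrightarrow> v \<le> 1 \<Longrightarrow>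
        pos_def_mat (F u v ** hu F sG u u v ** transpose (F u v))"
begin

abbreviation "G \<equiv> gg F"
abbreviation "h \<equiv> hh F sG"

lemma fc: "s \<in> {0..1} \<Longrightarrow> u \<in> {0..1} \<Longrightarrow> t \<in> {0..1} \<Longrightarrow> F s t = F u t ** F s u"
  by (rule flow_comp[OF cont_alpha flow_deriv flow_init])

lemma Ginv: "t \<in> {0..1} \<Longrightarrow> invertible (G t)"
proof -
  assume t: "t \<in> {0..1}"
  have "F 0 0 = F t 0 ** F 0 t" using fc[of 0 t 0] t by simp
  then have "F t 0 ** F 0 t = mat 1" using flow_init[of 0] by simp
  then show ?thesis unfolding gg_def using invertible_left_inverse by blast
qed

definition integrand where "integrand w = F w 0 ** Gam sG w ** transpose (F w 0)"

lemma h_def2: "h s t = integral {s..t} integrand"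
  by (simp add: hh_def hu_def integrand_def[abs_def])

lemma hu_eq:
  assumes "u \<in> {0..1}" "s \<in> {0..1}" "t \<in> {0..1}"
  shows "hu F sG u s t = G u ** h s t ** transpose (G u)"
proof -
  have iG: "invertible (G u)" using Ginv assms by simp
  have "hu F sG u s t = integral {s..t} (\<lambda>w. G u ** integrand w ** transpose (G u))"
    unfolding hu_def
  proof (rule integral_cong)
    fix w assume "w \<in> {s..t}"
    then have w: "w \<in> {0..1}" using assms by auto
    have "F w u = G u ** F w 0" using fc[of w 0 u] w assms by (simp add: gg_def)
    then show "F w u ** Gam sG w ** transpose (F w u) = G u ** integrand w ** transpose (G u)"
      by (simp add: integrand_def matrix_transpose_mul matrix_mul_assoc)
  qed
  also have "\<dots> = G u ** integral {s..t} integrand ** transpose (G u)"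
  proof (rule integral_blin[OF bl_sandwich bl_sandwich])
    fix X
    show "matrix_inv (G u) ** (G u ** X ** transpose (G u)) ** matrix_inv (transpose (G u)) = X"
      using iG transpose_invertible[OF iG] by (simp add: matrix_mul_assoc cancel2 cancel5)
  qed
  finally show ?thesis by (simp add: h_def2)
qed

lemma h_sym: "transpose (h s t) = h s t"
proof -
  have "transpose (h s t) = integral {s..t} (\<lambda>w. transpose (integrand w))"
    unfolding h_def2 by (rule integral_blin[OF bl_transpose bl_transpose, symmetric]) simp
  also have "\<dots> = h s t" unfolding h_def2
    by (rule integral_cong) (simp add: integrand_def Gam_def matrix_transpose_mul matrix_mul_assoc)
  finally show ?thesis .
qed

lemma not_posdef0: "\<not> pos_def_mat (0 :: real^'d::{finite,linorder}^'d::{finite,linorder})"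
  unfolding pos_def_mat_def
  by (metis axis_nth inner_zero_right less_irrefl matrix_vector_mult_0 zero_neq_one vec_eq_iff zero_index)

lemma integrable01: "integrand integrable_on {0..1}"
proof (rule ccontr)
  assume "\<not> integrand integrable_on {0..1}"
  then have "h 0 1 = 0" unfolding h_def2 by (rule not_integrable_integral)
  moreover have "hu F sG 0 0 1 = h 0 1" by (simp add: hh_def)
  ultimately show False using nondeg[of 0 1] not_posdef0 by simp
qed

lemma h_add:
  assumes "0 \<le> a" "a \<le> b" "b \<le> c" "c \<le> 1"
  shows "h a b + h b c = h a c"
  unfolding h_def2
  by (rule Henstock_Kurzweil_Integration.integral_combine) (use assms in \<open>auto intro: integrable_subinterval_real[OF integrable01]\<close>)

lemma h_refl: "h a a = 0"
  unfolding h_def2 by simp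

lemma h_pd: "0 \<le> u \<Longrightarrow> u < v \<Longrightarrow> v \<le> 1 \<Longrightarrow> pos_def_mat (h u v)"
proof -
  assume uv: "0 \<le> u" "u < v" "v \<le> 1"
  have Fu: "F u v ** G u = G v" using fc[of 0 u v] uv by (simp add: gg_def)
  have "F u v ** hu F sG u u v ** transpose (F u v) = (F u v ** G u) ** h u v ** transpose (F u v ** G u)"
    using hu_eq[of u u v] uv by (simp add: matrix_transpose_mul matrix_mul_assoc)
  then have "pos_def_mat (G v ** h u v ** transpose (G v))" using nondeg[OF uv] Fu by simp
  then show ?thesis using posdef_uncongr[OF Ginv[of v]] uv by simp
qed


lemma diff_h: "0 \<le> a \<Longrightarrow> a \<le> b \<Longrightarrow> b \<le> c \<Longrightarrow> c \<le> 1 \<Longrightarrow> h a c - h a b = h b c"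
  using h_add[of a b c] by (metis add_diff_cancel_left')

lemma diff_h2: "0 \<le> a \<Longrightarrow> a \<le> b \<Longrightarrow> b \<le> c \<Longrightarrow> c \<le> 1 \<Longrightarrow> h b c - h a c = - h a b"
  using h_add[of a b c] by (metis minus_diff_eq add_diff_cancel_right')

lemma diffC: "0 \<le> a \<Longrightarrow> a \<le> b \<Longrightarrow> b \<le> c \<Longrightarrow> c \<le> 1 \<Longrightarrow> h a c ** C - h a b ** C = h b c ** C"
  using diff_h by (simp add: mm_diff_rdistrib[symmetric])

lemma diffC2: "0 \<le> a \<Longrightarrow> a \<le> b \<Longrightarrow> b \<le> c \<Longrightarrow> c \<le> 1 \<Longrightarrow> h b c ** C - h a c ** C = h a b ** (- C)"
  using diff_h2 by (simp add: mm_diff_rdistrib[symmetric] mm_neg_left mm_neg_right)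

abbreviation "LL \<equiv> Lm F sG lp mp rp"
abbreviation "RR \<equiv> Rm F sG lp mp rp"
abbreviation "MM \<equiv> Mm F sG lp mp rp"
abbreviation "SS \<equiv> sig F sG lp mp rp"
abbreviation "PSI \<equiv> psi F sG lp mp rp"
abbreviation "DD \<equiv> Delta F sG lp mp rp"

lemma pts: "valid p q \<Longrightarrow> 0 \<le> lp p q \<and> lp p q < mp p q \<and> mp p q < rp p q \<and> rp p q \<le> 1"
  using lr unit by blast

lemma cell_facts:
  assumes v: "valid p q"
  defines "l \<equiv> lp p q" and "m \<equiv> mp p q" and "r \<equiv> rp p q"
  shows "SS p q ** transpose (SS p q) = G m ** (h l m ** matrix_inv (h l m + h m r) ** h m r) ** transpose (G m)"
    "LL p q = matrix_inv (h l m) ** matrix_inv (G m) ** SS p q"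
    "RR p q = matrix_inv (h m r) ** matrix_inv (G m) ** SS p q"
    "MM p q = transpose (G m) ** transpose (matrix_inv (SS p q))"
    "invertible (G m)" "transpose (h l m) = h l m" "transpose (h m r) = h m r"
    "pos_def_mat (h l m)" "pos_def_mat (h m r)"
proof -
  have p0: "p \<noteq> 0" using v by (simp add: valid_def)
  have o: "0 \<le> l" "l < m" "m < r" "r \<le> 1" using pts[OF v] unfolding l_def m_def r_def by auto
  have iG: "invertible (G m)" using Ginv o by simp
  have pA: "pos_def_mat (h l m)" and pB: "pos_def_mat (h m r)" using h_pd o by auto
  have sA: "transpose (h l m) = h l m" and sB: "transpose (h m r) = h m r" using h_sym by auto
  have add: "h l r = h l m + h m r" using h_add[of l m r] o by simp
  have iAB: "invertible (h l m + h m r)" using posdef_invertible[OF posdef_add[OF pA pB]] .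
  have arg: "hu F sG m l m ** matrix_inv (hu F sG m l r) ** hu F sG m m r
      = G m ** (h l m ** matrix_inv (h l m + h m r) ** h m r) ** transpose (G m)"
    using hu_eq[of m l m] hu_eq[of m l r] hu_eq[of m m r] o add sigma_arg[OF iG iAB] by simp
  have SP: "pos_def_mat (h l m ** matrix_inv (h l m + h m r) ** h m r)"
    and ST: "transpose (h l m ** matrix_inv (h l m + h m r) ** h m r) = h l m ** matrix_inv (h l m + h m r) ** h m r"
    using S_props[OF sA sB pA pB] by auto
  have pd: "pos_def_mat (G m ** (h l m ** matrix_inv (h l m + h m r) ** h m r) ** transpose (G m))"
    using posdef_congr[OF iG SP] .
  have sy: "transpose (G m ** (h l m ** matrix_inv (h l m + h m r) ** h m r) ** transpose (G m))
     = G m ** (h l m ** matrix_inv (h l m + h m r) ** h m r) ** transpose (G m)"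
    using ST by (simp add: matrix_transpose_mul matrix_mul_assoc)
  have "SS p q = cholesky (G m ** (h l m ** matrix_inv (h l m + h m r) ** h m r) ** transpose (G m))"
    using p0 arg by (simp add: sig_def Let_def l_def m_def r_def)
  then show "SS p q ** transpose (SS p q) = G m ** (h l m ** matrix_inv (h l m + h m r) ** h m r) ** transpose (G m)"
    using cholesky_props[OF sy pd] by simp
  show "LL p q = matrix_inv (h l m) ** matrix_inv (G m) ** SS p q"
    using p0 by (simp add: Lm_def l_def m_def)
  show "RR p q = matrix_inv (h m r) ** matrix_inv (G m) ** SS p q"
    by (simp add: Rm_def r_def m_def)
  show "MM p q = transpose (G m) ** transpose (matrix_inv (SS p q))"
    by (simp add: Mm_def m_def)
  show "invertible (G m)" "transpose (h l m) = h l m" "transpose (h m r) = h m r"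
    "pos_def_mat (h l m)" "pos_def_mat (h m r)" using iG sA sB pA pB by auto
qed

lemma Delta_form:
  assumes "p \<noteq> 0"
  shows "DD p q x = transpose (MM p q) ** (matrix_inv (G (mp p q)) ** x (mp p q))
     - transpose (LL p q) ** (matrix_inv (G (lp p q)) ** x (lp p q))
     - transpose (RR p q) ** (matrix_inv (G (rp p q)) ** x (rp p q))"
  using assms by (simp add: Delta_def Let_def matrix_mul_assoc)

lemma cell_zero:
  assumes v: "valid p q"
    and xe: "\<And>t. t \<in> {lp p q, mp p q, rp p q} \<Longrightarrow> x t = G t ** X t"
    and d1: "X (mp p q) - X (lp p q) = h (lp p q) (mp p q) ** C"
    and d2: "X (rp p q) - X (mp p q) = h (mp p q) (rp p q) ** C"
  shows "DD p q x = 0"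
proof -
  have p0: "p \<noteq> 0" using v by (simp add: valid_def)
  have o: "0 \<le> lp p q" "lp p q < mp p q" "mp p q < rp p q" "rp p q \<le> 1" using pts[OF v] by auto
  have c: "matrix_inv (G t) ** x t = X t" if "t \<in> {lp p q, mp p q, rp p q}" for t
  proof -
    have "t \<in> {0..1}" using that o by auto
    then show ?thesis using xe[OF that] Ginv by (simp add: cancel3)
  qed
  note cf = cell_facts[OF v]
  show ?thesis
    unfolding Delta_form[OF p0] c[of "lp p q", simplified] c[of "mp p q", simplified] c[of "rp p q", simplified]
    unfolding cf(2-4)
    by (rule cell_alg(3)[OF cf(5-9) cf(1) d1 d2])
qed

lemma psi_zero:
  assumes v: "valid n k" and t: "t \<le> lp n k \<or> rp n k \<le> t"
  shows "PSI n k t = 0"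
proof -
  have n0: "n \<noteq> 0" using v by (simp add: valid_def)
  have o: "lp n k < mp n k" "mp n k < rp n k" using lr[OF v] by auto
  show ?thesis using t n0 o h_refl by (auto simp: psi_def)
qed

lemma psi_left:
  assumes v: "valid n k" and t: "lp n k \<le> t" "t \<le> mp n k"
  shows "PSI n k t = G t ** h (lp n k) t ** LL n k"
  using assms by (simp add: psi_def valid_def)

lemma psi_right:
  assumes v: "valid n k" and t: "mp n k \<le> t" "t \<le> rp n k"
  shows "PSI n k t = G t ** h t (rp n k) ** RR n k"
proof (cases "t = mp n k")
  case True
  note cf = cell_facts[OF v]
  have o: "0 \<le> lp n k" "lp n k < mp n k" "mp n k < rp n k" "rp n k \<le> 1" using pts[OF v] by auto
  have iA: "invertible (h (lp n k) (mp n k))" and iB: "invertible (h (mp n k) (rp n k))"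
    using posdef_invertible cf(8,9) by auto
  have "h (lp n k) t ** LL n k = h t (rp n k) ** RR n k"
    unfolding cf(2,3) True using iA iB by (simp add: matrix_mul_assoc cancel6)
  then show ?thesis using True v o by (simp add: psi_def valid_def matrix_mul_assoc[symmetric])
next
  case False
  then show ?thesis using assms lr[OF v] by (simp add: psi_def valid_def)
qed


lemma cell_self:
  assumes v: "valid p q"
  shows "DD p q (PSI p q) = mat 1"
proof -
  have p0: "p \<noteq> 0" using v by (simp add: valid_def)
  have o: "0 \<le> lp p q" "lp p q < mp p q" "mp p q < rp p q" "rp p q \<le> 1" using pts[OF v] by auto
  note cf = cell_facts[OF v]
  have x1: "PSI p q (lp p q) = 0" using psi_left[OF v, of "lp p q"] o h_refl by simp
  have x3: "PSI p q (rp p q) = 0" using psi_zero[OF v, of "rp p q"] by simp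
  have x2: "matrix_inv (G (mp p q)) ** PSI p q (mp p q) = h (lp p q) (mp p q) ** LL p q"
    using psi_left[OF v, of "mp p q"] o cf(5) by (simp add: matrix_mul_assoc cancel5)
  show ?thesis
    unfolding Delta_form[OF p0] x1 x3 x2 using cell_alg(2)[OF cf(5-9) cf(1)] by (simp add: cf(2-4))
qed

lemma root_mat:
  shows "transpose (LL 0 0) ** (h 0 1 ** LL 0 0) = mat 1"
proof -
  have iG: "invertible (G 1)" using Ginv by simp
  have pH: "pos_def_mat (h 0 1)" using h_pd[of 0 1] by simp
  have sH: "transpose (h 0 1) = h 0 1" using h_sym .
  have pd: "pos_def_mat (G 1 ** h 0 1 ** transpose (G 1))" using posdef_congr[OF iG pH] .
  have sy: "transpose (G 1 ** h 0 1 ** transpose (G 1)) = G 1 ** h 0 1 ** transpose (G 1)"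
    using sH by (simp add: matrix_transpose_mul matrix_mul_assoc)
  have "SS 0 0 ** transpose (SS 0 0) = G 1 ** h 0 1 ** transpose (G 1)"
    using cholesky_props[OF sy pd] by (simp add: sig_def)
  from root_alg[OF iG sH posdef_invertible[OF pH] this]
  show ?thesis by (simp add: Lm_def)
qed

lemma main:
  assumes nk: "(n, k) \<in> idx" and pq: "(p, q) \<in> idx"
  shows "DD p q (PSI n k) = (if (n, k) = (p, q) then mat 1 else 0)"
proof (cases "p = 0")
  case True
  then have q0: "q = 0" using pq by (auto simp: idx_def)
  have D: "DD p q x = transpose (LL 0 0) ** (matrix_inv (G 1) ** x 1)" for x
    using True by (simp add: Delta_def matrix_mul_assoc)
  show ?thesis
  proof (cases "n = 0")
    case n0: True
    then have k0: "k = 0" using nk by (auto simp: idx_def)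
    have "matrix_inv (G 1) ** PSI n k 1 = h 0 1 ** LL 0 0"
      using n0 Ginv[of 1] by (simp add: psi_def matrix_mul_assoc cancel5)
    then show ?thesis using D root_mat True q0 n0 k0 by simp
  next
    case False
    then have v: "valid n k" using nk by (auto simp: idx_def valid_def)
    have "PSI n k 1 = 0" using psi_zero[OF v] unit[OF v] by simp
    then show ?thesis using D False True by simp
  qed
next
  case False
  then have vp: "valid p q" using pq by (auto simp: idx_def valid_def)
  have o: "0 \<le> lp p q" "lp p q < mp p q" "mp p q < rp p q" "rp p q \<le> 1" using pts[OF vp] by auto
  define l' where "l' = lp p q"
  define m' where "m' = mp p q"
  define r' where "r' = rp p q"
  note o = o[folded l'_def m'_def r'_def]
  show ?thesis
  proof (cases "n = 0")
    case n0: True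
    then have k0: "k = 0" using nk by (auto simp: idx_def)
    have "DD p q (PSI n k) = 0"
    proof (rule cell_zero[OF vp, where X = "\<lambda>t. h 0 t ** LL 0 0" and C = "LL 0 0"])
      fix t assume "t \<in> {lp p q, mp p q, rp p q}"
      show "PSI n k t = G t ** (h 0 t ** LL 0 0)" using n0 by (simp add: psi_def matrix_mul_assoc)
    next
      show "h 0 (mp p q) ** LL 0 0 - h 0 (lp p q) ** LL 0 0 = h (lp p q) (mp p q) ** LL 0 0"
        using diffC[of 0 l' m'] o by (simp add: l'_def m'_def)
      show "h 0 (rp p q) ** LL 0 0 - h 0 (mp p q) ** LL 0 0 = h (mp p q) (rp p q) ** LL 0 0"
        using diffC[of 0 m' r'] o by (simp add: r'_def m'_def)
    qed
    then show ?thesis using n0 False by simp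
  next
    case n1: False
    then have vn: "valid n k" using nk by (auto simp: idx_def valid_def)
    have on: "0 \<le> lp n k" "lp n k < mp n k" "mp n k < rp n k" "rp n k \<le> 1" using pts[OF vn] by auto
    show ?thesis
    proof (cases "(n, k) = (p, q)")
      case True
      then show ?thesis using cell_self[OF vp] by auto
    next
      case ne: False
      show ?thesis
      proof (cases "n < p \<and> q div 2^(p-n) = k")
        case True
        have nn: "n \<ge> 1" using vn by (simp add: valid_def)
        have ch: "(lp n k \<le> l' \<and> r' \<le> mp n k) \<or> (mp n k \<le> l' \<and> r' \<le> rp n k)"
          using child[OF vp _ nn] True unfolding l'_def r'_def by auto
        have "DD p q (PSI n k) = 0"
        proof (cases "lp n k \<le> l' \<and> r' \<le> mp n k")
          case left: True
          show ?thesis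
          proof (rule cell_zero[OF vp, where X = "\<lambda>t. h (lp n k) t ** LL n k" and C = "LL n k"])
            fix t assume "t \<in> {lp p q, mp p q, rp p q}"
            then have "lp n k \<le> t" "t \<le> mp n k" using left o unfolding l'_def m'_def r'_def by auto
            then show "PSI n k t = G t ** (h (lp n k) t ** LL n k)"
              using psi_left[OF vn] by (simp add: matrix_mul_assoc)
          next
            show "h (lp n k) (mp p q) ** LL n k - h (lp n k) (lp p q) ** LL n k = h (lp p q) (mp p q) ** LL n k"
              using diffC[of "lp n k" l' m'] o on left by (simp add: l'_def m'_def)
            show "h (lp n k) (rp p q) ** LL n k - h (lp n k) (mp p q) ** LL n k = h (mp p q) (rp p q) ** LL n k"
              using diffC[of "lp n k" m' r'] o on left by (simp add: r'_def m'_def)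
          qed
        next
          case right0: False
          then have right: "mp n k \<le> l'" "r' \<le> rp n k" using ch by auto
          show ?thesis
          proof (rule cell_zero[OF vp, where X = "\<lambda>t. h t (rp n k) ** RR n k" and C = "- RR n k"])
            fix t assume "t \<in> {lp p q, mp p q, rp p q}"
            then have "mp n k \<le> t" "t \<le> rp n k" using right o unfolding l'_def m'_def r'_def by auto
            then show "PSI n k t = G t ** (h t (rp n k) ** RR n k)"
              using psi_right[OF vn] by (simp add: matrix_mul_assoc)
          next
            show "h (mp p q) (rp n k) ** RR n k - h (lp p q) (rp n k) ** RR n k = h (lp p q) (mp p q) ** - RR n k"
              using diffC2[of l' m' "rp n k"] o on right by (simp add: l'_def m'_def)
            show "h (rp p q) (rp n k) ** RR n k - h (mp p q) (rp n k) ** RR n k = h (mp p q) (rp p q) ** - RR n k"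
              using diffC2[of m' r' "rp n k"] o on right by (simp add: r'_def m'_def)
          qed
        qed
        then show ?thesis using ne by auto
      next
        case nc: False
        have "DD p q (PSI n k) = 0"
        proof (rule cell_zero[OF vp, where X = "\<lambda>t. 0" and C = "0"])
          fix t assume t: "t \<in> {lp p q, mp p q, rp p q}"
          show "PSI n k t = G t ** 0" using psi_zero[OF vn far[OF vn vp _ nc t]] ne by auto
        qed simp_all
        then show ?thesis using ne by auto
      qed
    qed
  qed
qed

end

theorem proposition5:
  fixes \<alpha> :: "real \<Rightarrow> real^'d::{finite,linorder}^'d::{finite,linorder}"
    and sG :: "real \<Rightarrow> real^'m::finite^'d::{finite,linorder}"
    and F :: "real \<Rightarrow> real \<Rightarrow> real^'d::{finite,linorder}^'d::{finite,linorder}"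
    and \<rho> :: real
    and lp mp rp :: "nat \<Rightarrow> nat \<Rightarrow> real"
  assumes cont_alpha: "continuous_on {0..1} \<alpha>"
    and cont_sG: "continuous_on {0..1} sG"
    and flow_deriv: "\<And>s t. s \<in> {0..1} \<Longrightarrow> t \<in> {0..1} \<Longrightarrow>
        ((\<lambda>t. F s t) has_vector_derivative (\<alpha> t ** F s t)) (at t within {0..1})"
    and flow_init: "\<And>s. s \<in> {0..1} \<Longrightarrow> F s s = mat 1"
    and nondeg: "\<And>u v. 0 \<le> u \<Longrightarrow> u < v \<Longrightarrow> v \<le> 1 \<Longrightarrow>
        pos_def_mat (F u v ** hu F sG u u v ** transpose (F u v))"
    and rho: "0 < \<rho>" "\<rho> < 1"
    and part_init: "lp 1 0 = 0" "rp 1 0 = 1"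
    and part_lr: "\<And>n k. n \<ge> 1 \<Longrightarrow> k < 2^(n-1) \<Longrightarrow> lp n k < mp n k \<and> mp n k < rp n k"
    and part_left: "\<And>n k. n \<ge> 1 \<Longrightarrow> k < 2^(n-1) \<Longrightarrow>
        lp (n+1) (2*k) = lp n k \<and> rp (n+1) (2*k) = mp n k"
    and part_right: "\<And>n k. n \<ge> 1 \<Longrightarrow> k < 2^(n-1) \<Longrightarrow>
        lp (n+1) (2*k+1) = mp n k \<and> rp (n+1) (2*k+1) = rp n k"
    and part_ratio: "\<And>n k. n \<ge> 1 \<Longrightarrow> k < 2^(n-1) \<Longrightarrow>
        max (rp n k - mp n k) (mp n k - lp n k) < \<rho> * (rp n k - lp n k)"
    and nk: "(n, k) \<in> idx" and pq: "(p, q) \<in> idx"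
  shows "Delta F sG lp mp rp p q (psi F sG lp mp rp n k)
           = (if (n, k) = (p, q) then mat 1 else 0)"
proof -
  interpret S: setting lp mp rp \<alpha> sG F
    by (unfold_locales; fact part_init part_lr part_left part_right cont_alpha flow_deriv flow_init nondeg)
  show ?thesis using S.main[OF nk pq] .
qed

end
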